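(* Let $n \ge 1$ and $t$ be integers with $1 \le t < \frac{n+1}{2}$. Then the cross-blockchain transaction task $(\mathcal{I}, \mathcal{O}, \Delta)$ on $n+1$ blockchains, defined in the context, has no $t$-resilient protocol in the asynchronous message-passing model with crash failures. That is, no such protocol can guarantee that all local transactions end either all committed or all aborted, in accordance with the carrier map $\Delta$.
   Context: Setting. There are $n+1$ distinct blockchains $C_0,\dots,C_n$. An $(n+1)$-party cross-blockchain transaction touches exactly one block $v_i$ on each blockchain $C_i$. Input complex $\mathcal{I}$. The vertices are the $3(n+1)$ pairs $(v_i, a)$ with $0 \le i \le n$ and $a \in \{0,1,\bot\}$. Here $0$ means the local transaction is not committed, $1$ means it is committed, and $\bot$ means the block's branch was suspended by a fork. A nonempty set of vertices is a simplex if and only if its vertices involve pairwise distinct blocks. Output complex $\mathcal{O}$. The vertices are the pairs $(v_i, b)$ with $b \in \{0,1\}$, where $1$ means committed and $0$ means aborted. A nonempty set of vertices is a simplex if and only if its vertices involve pairwise distinct blocks and all carry the same value $b$. Carrier map $\Delta$. For a simplex $\sigma$ of $\mathcal{I}$ with block set $B(\sigma)$: - $\Delta(\sigma)$ is the simplex $\{(v,1): v \in B(\sigma)\}$ with its faces, if all input values in $\sigma$ are $1$; - it is $\{(v,0): v\in B(\sigma)\}$ with its faces, if some input value in $\sigma$ is $\bot$; - otherwise it is the subcomplex of $\mathcal{O}$ consisting of all simplices whose blocks lie in $B(\sigma)$, i.e. both the all-$0$ and the all-$1$ simplices on $B(\sigma)$ and their faces. Computational model. There are $n+1$ processes (process $i$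 corresponds to blockchain $C_i$) communicating by asynchronous message passing, with at most $t$ of them failing by crashing. Process $i$ starts with input vertex $(v_i,a_i)$ of $\mathcal{I}$. A $t$-resilient protocol solves the task if, in every execution with at most $t$ crashes, each non-crashed process $i$ eventually decides an output vertex $(v_i,b_i)$ of $\mathcal{O}$, and the set of decided vertices is a simplex of $\Delta(\sigma)$, where $\sigma$ is the simplex of inputs of the participating processes. *)

theory Defs
  imports Main "HOL-Library.Multiset"
begin

(* Blocks: block v_i on blockchain C_i is identified with the index i (0 <= i <= n). *)

datatype inval = InZero | InOne | InBot   (* 0 = not committed, 1 = committed, \<bottom> = suspended *)

type_synonym in_vertex = "nat \<times> inval"
type_synonym out_vertex = "nat \<times> bool"   (* True = committed (1), False = aborted (0) *)

definition in_simplex :: "nat \<Rightarrow> in_vertex set \<Rightarrow> bool" where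
  "in_simplex n S \<longleftrightarrow> S \<noteq> {} \<and> fst ` S \<subseteq> {0..n} \<and> inj_on fst S"

definition out_simplex :: "nat \<Rightarrow> out_vertex set \<Rightarrow> bool" where
  "out_simplex n S \<longleftrightarrow> S \<noteq> {} \<and> fst ` S \<subseteq> {0..n} \<and> inj_on fst S \<and> (\<exists>b. snd ` S = {b})"

(* Carrier map Delta: the set of simplices of the subcomplex Delta(sigma) of O *)
definition Delta :: "nat \<Rightarrow> in_vertex set \<Rightarrow> out_vertex set set" where
  "Delta n \<sigma> =
     (if (\<forall>x\<in>\<sigma>. snd x = InOne) then {\<tau>. \<tau> \<noteq> {} \<and> \<tau> \<subseteq> {(v, True) | v. v \<in> fst ` \<sigma>}}
      else if (\<exists>x\<in>\<sigma>. snd x = InBot) then {\<tau>. \<tau> \<noteq> {} \<and> \<tau> \<subseteq> {(v, False) | v. v \<in> fst ` \<sigma>}}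
      else {\<tau>. out_simplex n \<tau> \<and> fst ` \<tau> \<subseteq> fst ` \<sigma>})"

(* A protocol for processes 0..n consists of
     init  : initial local state of process i given its input vertex (v_i, a_i);
     stp : a step of process p in local state s receiving an optional message
             (None = no message delivered); returns new local state and a list of
             messages sent, each with its destination process;
     dec   : the decision (output value) recorded in a local state, if any.
   A configuration is a vector of local states and a multiset of in-transit
   messages (destination, content). An event is (p, received message option). *)

type_synonym ('s, 'm) config = "(nat \<Rightarrow> 's) \<times> (nat \<times> 'm) multiset"

definition execution ::
  "nat \<Rightarrow> (in_vertex \<Rightarrow> 's) \<Rightarrow> (nat \<Rightarrow> 's \<Rightarrow> 'm option \<Rightarrow> 's \<times> (nat \<times> 'm) list)
   \<Rightarrow> (nat \<Rightarrow> inval) \<Rightarrow> (nat \<Rightarrow> ('s, 'm) config) \<Rightarrow> (nat \<Rightarrow> nat \<times> 'm option) \<Rightarrow> bool" where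
  "execution n init stp a C E \<longleftrightarrow>
     C 0 = ((\<lambda>i. init (i, a i)), {#}) \<and>
     (\<forall>k. fst (E k) \<le> n \<and>
          (case snd (E k) of None \<Rightarrow> True | Some m \<Rightarrow> (fst (E k), m) \<in># snd (C k)) \<and>
          (let p = fst (E k); mo = snd (E k); r = stp p (fst (C k) p) mo in
             C (Suc k) = ((fst (C k))(p := fst r),
                          snd (C k) - (case mo of None \<Rightarrow> {#} | Some m \<Rightarrow> {#(p, m)#}) + mset (snd r))))"

definition correct :: "nat \<Rightarrow> (nat \<Rightarrow> nat \<times> 'm option) \<Rightarrow> nat \<Rightarrow> bool" where
  "correct n E p \<longleftrightarrow> p \<le> n \<and> infinite {k. fst (E k) = p}"

definition faulty :: "nat \<Rightarrow> (nat \<Rightarrow> nat \<times> 'm option) \<Rightarrow> nat set" where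
  "faulty n E = {p. p \<le> n \<and> \<not> correct n E p}"

definition fair :: "nat \<Rightarrow> (nat \<Rightarrow> ('s, 'm) config) \<Rightarrow> (nat \<Rightarrow> nat \<times> 'm option) \<Rightarrow> bool" where
  "fair n C E \<longleftrightarrow>
     (\<forall>k p m. correct n E p \<and> (p, m) \<in># snd (C k) \<longrightarrow> (\<exists>k'\<ge>k. E k' = (p, Some m)))"

definition participating :: "nat \<Rightarrow> (nat \<Rightarrow> nat \<times> 'm option) \<Rightarrow> nat set" where
  "participating n E = {p. p \<le> n \<and> (\<exists>k. fst (E k) = p)}"

definition input_simplex_of :: "nat \<Rightarrow> (nat \<Rightarrow> inval) \<Rightarrow> (nat \<Rightarrow> nat \<times> 'm option) \<Rightarrow> in_vertex set" where
  "input_simplex_of n a E = {(p, a p) | p. p \<in> participating n E}"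

definition decided :: "nat \<Rightarrow> ('s \<Rightarrow> bool option) \<Rightarrow> (nat \<Rightarrow> ('s, 'm) config)
                        \<Rightarrow> (nat \<Rightarrow> nat \<times> 'm option) \<Rightarrow> out_vertex set" where
  "decided n dec C E = {(p, b) | p b. p \<in> participating n E \<and> (\<exists>k. dec (fst (C k) p) = Some b)}"

definition solves_task ::
  "nat \<Rightarrow> nat \<Rightarrow> (in_vertex \<Rightarrow> 's) \<Rightarrow> (nat \<Rightarrow> 's \<Rightarrow> 'm option \<Rightarrow> 's \<times> (nat \<times> 'm) list)
   \<Rightarrow> ('s \<Rightarrow> bool option) \<Rightarrow> bool" where
  "solves_task n t init stp dec \<longleftrightarrow>
     (\<forall>a C E. execution n init stp a C E \<and> fair n C E \<and> card (faulty n E) \<le> t \<longrightarrow>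
        (\<forall>p. correct n E p \<longrightarrow> (\<exists>k b. dec (fst (C k) p) = Some b)) \<and>
        decided n dec C E \<in> Delta n (input_simplex_of n a E))"

end

theory Submission
  imports Defs "HOL-Library.Infinite_Set"
begin

definition pick :: "nat \<Rightarrow> (nat \<times> 'm) list \<Rightarrow> 'm option" where
  "pick p L = map_option snd (find (\<lambda>x. fst x = p) L)"

definition rem :: "nat \<Rightarrow> 'm option \<Rightarrow> (nat \<times> 'm) list \<Rightarrow> (nat \<times> 'm) list" where
  "rem p mo L = (case mo of None \<Rightarrow> L | Some m \<Rightarrow> remove1 (p, m) L)"

fun run :: "(nat \<Rightarrow> 's \<Rightarrow> 'm option \<Rightarrow> 's \<times> (nat \<times> 'm) list) \<Rightarrow> (nat \<Rightarrow> nat) \<Rightarrow> (nat \<Rightarrow> 's)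
   \<Rightarrow> nat \<Rightarrow> (nat \<Rightarrow> 's) \<times> (nat \<times> 'm) list" where
  "run stp sg s0 0 = (s0, [])"
| "run stp sg s0 (Suc i) = (let S = run stp sg s0 i; p = sg i; mo = pick p (snd S);
      r = stp p (fst S p) mo in ((fst S)(p := fst r), rem p mo (snd S) @ snd r))"

definition Cfg where "Cfg stp sg s0 k = (fst (run stp sg s0 k), mset (snd (run stp sg s0 k)))"
definition Ev where "Ev stp sg s0 k = (sg k, pick (sg k) (snd (run stp sg s0 k)))"

fun pos :: "'a \<Rightarrow> 'a list \<Rightarrow> nat" where
  "pos x [] = 0"
| "pos x (y # ys) = (if y = x then 0 else Suc (pos x ys))"

lemma pos_app: "x \<in> set L \<Longrightarrow> pos x (L @ M) = pos x L"
  by (induction L) auto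

lemma pos_rem: "x \<in> set L \<Longrightarrow> y \<noteq> x \<Longrightarrow> x \<in> set (remove1 y L) \<and> pos x (remove1 y L) \<le> pos x L"
  by (induction L) auto

lemma pos_rem_lt: "find (\<lambda>z. fst z = p) L = Some y \<Longrightarrow> y \<noteq> x \<Longrightarrow> fst x = p \<Longrightarrow> x \<in> set L
   \<Longrightarrow> pos x (remove1 y L) < pos x L"
proof (induction L)
  case Nil then show ?case by simp
next
  case (Cons z zs)
  show ?case
  proof (cases "fst z = p")
    case True
    then show ?thesis using Cons.prems by auto
  next
    case False
    then have "z \<noteq> y" using Cons.prems(1) by (auto simp: find_Some_iff)
    moreover have "z \<noteq> x" using False Cons.prems by auto
    ultimately show ?thesis using Cons False by auto
  qed
qed

lemma find_SomeD': "find P L = Some x \<Longrightarrow> x \<in> set L \<and> P x"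
  by (induction L) (auto split: if_splits)

lemma pick_find: "pick p L = Some m \<Longrightarrow> find (\<lambda>x. fst x = p) L = Some (p, m)"
  unfolding pick_def using find_SomeD'[of "\<lambda>x. fst x = p" L] by (cases "find (\<lambda>x. fst x = p) L") auto

lemma pick_in: "pick p L = Some m \<Longrightarrow> (p, m) \<in> set L"
  using pick_find find_SomeD' by fastforce

lemma pick_none: "(p, m) \<in> set L \<Longrightarrow> pick p L \<noteq> None"
  unfolding pick_def by (auto simp: find_None_iff)

lemma run_Suc_snd: "snd (run stp sg s0 (Suc i)) =
   rem (sg i) (pick (sg i) (snd (run stp sg s0 i))) (snd (run stp sg s0 i)) @
   snd (stp (sg i) (fst (run stp sg s0 i) (sg i)) (pick (sg i) (snd (run stp sg s0 i))))"
  by (simp add: Let_def)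

lemma exec_run:
  assumes "\<forall>i. sg i \<le> n"
  shows "execution n init stp a (Cfg stp sg (\<lambda>i. init (i, a i))) (Ev stp sg (\<lambda>i. init (i, a i)))"
  unfolding execution_def
proof (intro conjI allI)
  show "Cfg stp sg (\<lambda>i. init (i, a i)) 0 = ((\<lambda>i. init (i, a i)), {#})"
    by (simp add: Cfg_def)
next
  fix k
  show "fst (Ev stp sg (\<lambda>i. init (i, a i)) k) \<le> n" using assms by (simp add: Ev_def)
  show "case snd (Ev stp sg (\<lambda>i. init (i, a i)) k) of None \<Rightarrow> True
        | Some m \<Rightarrow> (fst (Ev stp sg (\<lambda>i. init (i, a i)) k), m) \<in># snd (Cfg stp sg (\<lambda>i. init (i, a i)) k)"
    by (auto simp: Ev_def Cfg_def split: option.split dest: pick_in)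
  show "let p = fst (Ev stp sg (\<lambda>i. init (i, a i)) k); mo = snd (Ev stp sg (\<lambda>i. init (i, a i)) k);
         r = stp p (fst (Cfg stp sg (\<lambda>i. init (i, a i)) k) p) mo
     in Cfg stp sg (\<lambda>i. init (i, a i)) (Suc k) =
        ((fst (Cfg stp sg (\<lambda>i. init (i, a i)) k))(p := fst r),
         snd (Cfg stp sg (\<lambda>i. init (i, a i)) k) - (case mo of None \<Rightarrow> {#} | Some m \<Rightarrow> {#(p, m)#}) +
         mset (snd r))"
    by (auto simp: Ev_def Cfg_def Let_def rem_def mset_remove1 split: option.split)
qed

lemma fair_aux:
  assumes inf: "\<forall>k. \<exists>j\<ge>k. sg j = p"
  shows "(p, m) \<in> set (snd (run stp sg s0 k)) \<Longrightarrow>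
         \<exists>k'\<ge>k. sg k' = p \<and> pick p (snd (run stp sg s0 k')) = Some m"
proof (induction "pos (p, m) (snd (run stp sg s0 k))" arbitrary: k rule: less_induct)
  case less
  let ?L = "\<lambda>i. snd (run stp sg s0 i)"
  define j where "j = (LEAST j. k \<le> j \<and> sg j = p)"
  have ex: "\<exists>j. k \<le> j \<and> sg j = p" using inf by blast
  have j1: "k \<le> j" "sg j = p" using LeastI_ex[OF ex] unfolding j_def by auto
  have j2: "\<And>i. k \<le> i \<Longrightarrow> i < j \<Longrightarrow> sg i \<noteq> p"
    using not_less_Least unfolding j_def by blast
  have keep: "k + d \<le> j \<Longrightarrow> (p, m) \<in> set (?L (k + d)) \<and> pos (p, m) (?L (k + d)) \<le> pos (p, m) (?L k)" for d
  proof (induction d)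
    case 0 then show ?case using less.prems by simp
  next
    case (Suc d)
    then have IH: "(p, m) \<in> set (?L (k + d))" "pos (p, m) (?L (k + d)) \<le> pos (p, m) (?L k)" by auto
    have ne: "sg (k + d) \<noteq> p" using j2 Suc.prems by simp
    show ?case
    proof (cases "pick (sg (k + d)) (?L (k + d))")
      case None
      then show ?thesis using IH by (simp add: Let_def rem_def pos_app)
    next
      case (Some m')
      have "(sg (k + d), m') \<noteq> (p, m)" using ne by auto
      from pos_rem[OF IH(1) this] IH(2) Some show ?thesis
        by (simp add: Let_def rem_def pos_app)
    qed
  qed
  from keep[of "j - k"] j1 have inj: "(p, m) \<in> set (?L j)" "pos (p, m) (?L j) \<le> pos (p, m) (?L k)" by auto
  obtain m'' where m'': "pick p (?L j) = Some m''" using pick_none[OF inj(1)] by auto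
  show ?case
  proof (cases "m'' = m")
    case True then show ?thesis using j1 m'' by auto
  next
    case False
    have fd: "find (\<lambda>x. fst x = p) (?L j) = Some (p, m'')" using pick_find[OF m''] .
    have lt: "pos (p, m) (remove1 (p, m'') (?L j)) < pos (p, m) (?L j)"
      using pos_rem_lt[OF fd _ _ inj(1)] False by auto
    have mem: "(p, m) \<in> set (remove1 (p, m'') (?L j))" using pos_rem[OF inj(1)] False by auto
    have LS: "?L (Suc j) = remove1 (p, m'') (?L j) @ snd (stp p (fst (run stp sg s0 j) p) (Some m''))"
      using j1 m'' by (simp add: Let_def rem_def)
    have "pos (p, m) (?L (Suc j)) < pos (p, m) (?L k)"
      using LS lt inj(2) mem by (simp add: pos_app)
    moreover have "(p, m) \<in> set (?L (Suc j))" using LS mem by simp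
    ultimately obtain k' where "k' \<ge> Suc j" "sg k' = p \<and> pick p (?L k') = Some m" using less.hyps by blast
    then show ?thesis using j1 by (intro exI[of _ k']) auto
  qed
qed

lemma fair_run: "fair n (Cfg stp sg s0) (Ev stp sg s0)"
  unfolding fair_def
proof (intro allI impI)
  fix k p m
  assume a: "correct n (Ev stp sg s0) p \<and> (p, m) \<in># snd (Cfg stp sg s0 k)"
  then have "infinite {k. sg k = p}" by (simp add: correct_def Ev_def)
  then have inf: "\<forall>k. \<exists>j\<ge>k. sg j = p" by (simp add: infinite_nat_iff_unbounded_le)
  from a have "(p, m) \<in> set (snd (run stp sg s0 k))" by (simp add: Cfg_def)
  from fair_aux[OF inf this] show "\<exists>k'\<ge>k. Ev stp sg s0 k' = (p, Some m)"
    by (auto simp: Ev_def)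
qed

lemma run_agree:
  assumes "\<And>i. i < K \<Longrightarrow> sg' i = sg i" "\<And>i. i < K \<Longrightarrow> sg i \<noteq> q"
  shows "i \<le> K \<Longrightarrow> run stp sg' (s0(q := x)) i = ((fst (run stp sg s0 i))(q := x), snd (run stp sg s0 i))"
proof (induction i)
  case 0 then show ?case by simp
next
  case (Suc i)
  then have "i < K" by simp
  then have e: "sg' i = sg i" "sg i \<noteq> q" using assms by auto
  show ?case using Suc e by (auto simp: Let_def fun_eq_iff)
qed

lemma inf_sg1:
  assumes "1 \<le> p" "p \<le> n"
  shows "\<exists>j\<ge>k. Suc (j mod n) = p"
proof -
  have "(k * n + (p - 1)) mod n = (p - 1) mod n" by (metis add.commute mod_mult_self1)
  then have "(k * n + (p - 1)) mod n = p - 1" using assms by simp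
  moreover have "k \<le> k * n" using assms by simp
  then have "k \<le> k * n + (p - 1)" by linarith
  ultimately show ?thesis using assms by (intro exI[of _ "k * n + (p - 1)"]) auto
qed

theorem proposition1:
  fixes n t :: nat
  assumes "1 \<le> n" and "1 \<le> t" and "2 * t < n + 1"
  shows "\<not> (\<exists>(init :: in_vertex \<Rightarrow> 's) (stp :: nat \<Rightarrow> 's \<Rightarrow> 'm option \<Rightarrow> 's \<times> (nat \<times> 'm) list)
              (dec :: 's \<Rightarrow> bool option). solves_task n t init stp dec)"
proof
  assume "\<exists>(init :: in_vertex \<Rightarrow> 's) (stp :: nat \<Rightarrow> 's \<Rightarrow> 'm option \<Rightarrow> 's \<times> (nat \<times> 'm) list)
              (dec :: 's \<Rightarrow> bool option). solves_task n t init stp dec"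
  then obtain init :: "in_vertex \<Rightarrow> 's" and stp :: "nat \<Rightarrow> 's \<Rightarrow> 'm option \<Rightarrow> 's \<times> (nat \<times> 'm) list"
    and dec :: "'s \<Rightarrow> bool option" where ST: "solves_task n t init stp dec" by blast
  define sg1 where "sg1 = (\<lambda>i::nat. Suc (i mod n))"
  define a1 where "a1 = (\<lambda>_::nat. InOne)"
  define s1 where "s1 = (\<lambda>i. init (i, a1 i))"
  have sg1n: "\<forall>i. sg1 i \<le> n" using assms(1) by (auto simp: sg1_def Suc_le_eq)
  have ex1: "execution n init stp a1 (Cfg stp sg1 s1) (Ev stp sg1 s1)"
    unfolding s1_def by (rule exec_run[OF sg1n])
  have fair1: "fair n (Cfg stp sg1 s1) (Ev stp sg1 s1)" by (rule fair_run)
  have cor1: "correct n (Ev stp sg1 s1) p" if "1 \<le> p" "p \<le> n" for p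
  proof -
    have "\<forall>k. \<exists>j\<ge>k. sg1 j = p" using inf_sg1[OF that] by (simp add: sg1_def)
    then show ?thesis using that by (simp add: correct_def Ev_def infinite_nat_iff_unbounded_le)
  qed
  have "faulty n (Ev stp sg1 s1) \<subseteq> {0}" using cor1 by (auto simp: faulty_def Suc_le_eq)
  then have "card (faulty n (Ev stp sg1 s1)) \<le> 1" using card_mono[of "{0::nat}"] by fastforce
  then have ft1: "card (faulty n (Ev stp sg1 s1)) \<le> t" using assms(2) by simp
  from ST ex1 fair1 ft1 have R1:
    "(\<forall>p. correct n (Ev stp sg1 s1) p \<longrightarrow> (\<exists>k b. dec (fst (Cfg stp sg1 s1 k) p) = Some b))"
    "decided n dec (Cfg stp sg1 s1) (Ev stp sg1 s1) \<in> Delta n (input_simplex_of n a1 (Ev stp sg1 s1))"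
    unfolding solves_task_def by blast+
  obtain K b where Kb: "dec (fst (Cfg stp sg1 s1 K) 1) = Some b" using R1(1) cor1[of 1] assms(1) by blast
  have p1: "1 \<in> participating n (Ev stp sg1 s1)"
    using assms(1) by (auto simp: participating_def Ev_def sg1_def intro!: exI[of _ 0])
  have "(1, b) \<in> decided n dec (Cfg stp sg1 s1) (Ev stp sg1 s1)"
    using Kb p1 by (auto simp: decided_def)
  with R1(2) have "b = True" by (auto simp: Delta_def input_simplex_of_def a1_def)
  define sg2 where "sg2 = sg1(K := 0)"
  define a2 where "a2 = a1(0 := InBot)"
  define s2 where "s2 = (\<lambda>i. init (i, a2 i))"
  have s2eq: "s2 = s1(0 := init (0, InBot))" by (auto simp: s2_def s1_def a2_def)
  have sg2n: "\<forall>i. sg2 i \<le> n" using sg1n by (simp add: sg2_def)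
  have ex2: "execution n init stp a2 (Cfg stp sg2 s2) (Ev stp sg2 s2)"
    unfolding s2_def by (rule exec_run[OF sg2n])
  have fair2: "fair n (Cfg stp sg2 s2) (Ev stp sg2 s2)" by (rule fair_run)
  have inf2: "\<exists>j\<ge>k. sg2 j = p" if pp: "1 \<le> p" "p \<le> n" for p k
  proof -
    obtain j where "j \<ge> max k (Suc K)" "Suc (j mod n) = p" using inf_sg1[OF pp, of "max k (Suc K)"] by blast
    then show ?thesis by (intro exI[of _ j]) (auto simp: sg2_def sg1_def)
  qed
  have cor2: "correct n (Ev stp sg2 s2) p" if "1 \<le> p" "p \<le> n" for p
    using inf2[OF that] that by (simp add: correct_def Ev_def infinite_nat_iff_unbounded_le)
  have "faulty n (Ev stp sg2 s2) \<subseteq> {0}" using cor2 by (auto simp: faulty_def Suc_le_eq)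
  then have "card (faulty n (Ev stp sg2 s2)) \<le> 1" using card_mono[of "{0::nat}"] by fastforce
  then have ft2: "card (faulty n (Ev stp sg2 s2)) \<le> t" using assms(2) by simp
  from ST ex2 fair2 ft2 have R2:
    "decided n dec (Cfg stp sg2 s2) (Ev stp sg2 s2) \<in> Delta n (input_simplex_of n a2 (Ev stp sg2 s2))"
    unfolding solves_task_def by blast
  have agree: "run stp sg2 s2 K = ((fst (run stp sg1 s1 K))(0 := init (0, InBot)), snd (run stp sg1 s1 K))"
    unfolding s2eq by (rule run_agree[where K=K]) (auto simp: sg2_def sg1_def)
  have d2: "dec (fst (Cfg stp sg2 s2 K) 1) = Some True"
    using Kb \<open>b = True\<close> agree by (simp add: Cfg_def)
  have p21: "1 \<in> participating n (Ev stp sg2 s2)"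
    using inf2[of 1 0] assms(1) by (auto simp: participating_def Ev_def)
  have p20: "0 \<in> participating n (Ev stp sg2 s2)"
    by (auto simp: participating_def Ev_def sg2_def intro!: exI[of _ K])
  have "(1, True) \<in> decided n dec (Cfg stp sg2 s2) (Ev stp sg2 s2)"
    using d2 p21 by (auto simp: decided_def)
  moreover have "(0, InBot) \<in> input_simplex_of n a2 (Ev stp sg2 s2)"
    using p20 by (auto simp: input_simplex_of_def a2_def)
  ultimately have c1: "\<not> (\<forall>x\<in>input_simplex_of n a2 (Ev stp sg2 s2). snd x = InOne)"
    and c2: "\<exists>x\<in>input_simplex_of n a2 (Ev stp sg2 s2). snd x = InBot"
    and c3: "(1, True) \<in> decided n dec (Cfg stp sg2 s2) (Ev stp sg2 s2)" by force+
  from R2 c1 c2 have "decided n dec (Cfg stp sg2 s2) (Ev stp sg2 s2) \<subseteq>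
      {(v, False) |v. v \<in> fst ` input_simplex_of n a2 (Ev stp sg2 s2)}"
    unfolding Delta_def by simp
  with c3 show False by blast
qed

end
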